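(* Let $\mathcal{F}$ be a class of maps satisfying: (i) $\mathcal{F}(Y,Y)$ contains the identity map for every Banach space $Y$; (ii) $\mathcal{F}(Y,Z)$ is a vector space for all Banach spaces $Y,Z$; (iii) if $A\colon Y\to U$ and $B\colon V\to Z$ are affine maps and $F\in\mathcal{F}(U,V)$, then $B\circ F\circ A\in\mathcal{F}(Y,Z)$. Then an affine equivariant integrator map $\phi$ is $\mathcal{F}$-invariant preserving if and only if it is $\mathcal{F}$-functionally equivariant.
   Context: All spaces are real Banach spaces; $\mathfrak{X}(Y)$ denotes the smooth vector fields on $Y$. A class of maps $\mathcal F$ assigns to each pair of Banach spaces $Y,Z$ a set $\mathcal F(Y,Z)$ of Gâteaux differentiable maps $Y\to Z$. An integrator map $\phi$ is a collection of smooth maps $\phi_Y\colon\mathfrak{X}(Y)\to\mathfrak{X}(Y)$, one for each Banach space $Y$; write $\phi(f)$. For Gâteaux differentiable $\chi\colon Y\to U$, $f\sim_\chi g$ means $\chi'(y)f(y)=g(\chi(y))$ for all $y$. $\phi$ is affine equivariant if for every affine $A\colon Y\to U$ between Banach spaces, $f\sim_A g$ implies $\phi(f)\sim_A\phi(g)$. Given $F\colon Y\to Z$ and $f\in\mathfrak X(Y)$, the augmented vector field is $g\in\mathfrak X(Y\times Z)$, $g(y,z)=(f(y),F'(y)f(y))$; $\phi$ is $F$-functionally equivariant if $\phi(f)\sim_{(\mathrm{id},F)}\phi(g)$ for all $f\in\mathfrak X(Y)$, where $(\mathrm{id},F)(y)=(y,F(y))$. $\phi$ is $F$-invariant preserving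 if for all $f\in\mathfrak X(Y)$, $F'f=0$ (i.e. $F'(y)f(y)=0$ for all $y$) implies $F'\phi(f)=0$. $\phi$ is $\mathcal F$-functionally equivariant (resp. $\mathcal F$-invariant preserving) if it is $F$-functionally equivariant (resp. $F$-invariant preserving) for all $F\in\mathcal F(Y,Z)$ and all Banach spaces $Y,Z$. *)

theory Defs
  imports "HOL-Analysis.Analysis"
begin

definition dquot :: "('a::real_normed_vector \<Rightarrow> 'b::real_normed_vector) \<Rightarrow> 'a \<Rightarrow> 'a \<Rightarrow> real \<Rightarrow> 'b" where
  "dquot F y v = (\<lambda>t. inverse t *\<^sub>R (F (y + t *\<^sub>R v) - F y))"

definition gderiv :: "('a::real_normed_vector \<Rightarrow> 'b::real_normed_vector) \<Rightarrow> 'a \<Rightarrow> 'a \<Rightarrow> 'b" where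
  "gderiv F y v = Lim (at (0::real)) (dquot F y v)"

definition gateaux_differentiable :: "('a::real_normed_vector \<Rightarrow> 'b::real_normed_vector) \<Rightarrow> bool" where
  "gateaux_differentiable F \<longleftrightarrow>
     (\<forall>y. \<exists>L. bounded_linear L \<and> (\<forall>v. (dquot F y v \<longlongrightarrow> L v) (at 0)))"

section \<open>Smooth maps (Bastiani C-infinity; equals Frechet C-infinity on Banach spaces)\<close>

fun iter_dd :: "('a::real_normed_vector \<Rightarrow> 'b::real_normed_vector) \<Rightarrow> 'a list \<Rightarrow> 'a \<Rightarrow> 'b" where
  "iter_dd f [] = f"
| "iter_dd f (v # vs) = (\<lambda>x. gderiv (iter_dd f vs) x v)"

definition smooth :: "('a::real_normed_vector \<Rightarrow> 'b::real_normed_vector) \<Rightarrow> bool" where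
  "smooth f \<longleftrightarrow>
     (\<forall>vs x v. (dquot (iter_dd f vs) x v \<longlongrightarrow> iter_dd f (v # vs) x) (at 0)) \<and>
     (\<forall>k vs x X V. length vs = k \<and> (\<forall>n. length (V n) = k) \<and> X \<longlonglongrightarrow> x \<and>
        (\<forall>i<k. (\<lambda>n. V n ! i) \<longlonglongrightarrow> vs ! i)
        \<longrightarrow> (\<lambda>n. iter_dd f (V n) (X n)) \<longlonglongrightarrow> iter_dd f vs x)"

definition vfields :: "('a::real_normed_vector \<Rightarrow> 'a) set" where
  "vfields = {f. smooth f}"

definition caffine :: "('a::real_normed_vector \<Rightarrow> 'b::real_normed_vector) \<Rightarrow> bool" where
  "caffine A \<longleftrightarrow> (\<exists>L c. bounded_linear L \<and> (\<forall>y. A y = L y + c))"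

definition related :: "('a::real_normed_vector \<Rightarrow> 'b::real_normed_vector) \<Rightarrow> ('a \<Rightarrow> 'a) \<Rightarrow> ('b \<Rightarrow> 'b) \<Rightarrow> bool" where
  "related h f g \<longleftrightarrow> (\<forall>y. gderiv h y (f y) = g (h y))"

definition integrator_comp :: "(('a::real_normed_vector \<Rightarrow> 'a) \<Rightarrow> ('a \<Rightarrow> 'a)) \<Rightarrow> bool" where
  "integrator_comp \<phi> \<longleftrightarrow> (\<forall>f\<in>vfields. \<phi> f \<in> vfields)"

definition aff_equiv :: "(('a::real_normed_vector \<Rightarrow> 'a) \<Rightarrow> ('a \<Rightarrow> 'a)) \<Rightarrow>
     (('b::real_normed_vector \<Rightarrow> 'b) \<Rightarrow> ('b \<Rightarrow> 'b)) \<Rightarrow> bool" where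
  "aff_equiv \<phi>Y \<phi>U \<longleftrightarrow>
     (\<forall>(A::'a \<Rightarrow> 'b) f g. caffine A \<and> f \<in> vfields \<and> g \<in> vfields \<and> related A f g
        \<longrightarrow> related A (\<phi>Y f) (\<phi>U g))"

definition augmented :: "('a::real_normed_vector \<Rightarrow> 'b::real_normed_vector) \<Rightarrow> ('a \<Rightarrow> 'a) \<Rightarrow> ('a \<times> 'b \<Rightarrow> 'a \<times> 'b)" where
  "augmented F f = (\<lambda>(y, z). (f y, gderiv F y (f y)))"

text \<open>F-functional equivariance (quantifying over those f whose augmented field is a
  smooth vector field, as is implicit in the paper).\<close>
definition func_equiv :: "(('a::real_normed_vector \<Rightarrow> 'a) \<Rightarrow> ('a \<Rightarrow> 'a)) \<Rightarrow>
     (('a \<times> 'b \<Rightarrow> 'a \<times> 'b) \<Rightarrow> ('a \<times> 'b \<Rightarrow> 'a \<times> 'b)) \<Rightarrow> ('a \<Rightarrow> 'b::real_normed_vector) \<Rightarrow> bool" where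
  "func_equiv \<phi>Y \<phi>YZ F \<longleftrightarrow>
     (\<forall>f\<in>vfields. augmented F f \<in> vfields \<longrightarrow>
        related (\<lambda>y. (y, F y)) (\<phi>Y f) (\<phi>YZ (augmented F f)))"

definition inv_pres :: "(('a::real_normed_vector \<Rightarrow> 'a) \<Rightarrow> ('a \<Rightarrow> 'a)) \<Rightarrow> ('a \<Rightarrow> 'b::real_normed_vector) \<Rightarrow> bool" where
  "inv_pres \<phi> F \<longleftrightarrow>
     (\<forall>f\<in>vfields. (\<forall>y. gderiv F y (f y) = 0) \<longrightarrow> (\<forall>y. gderiv F y (\<phi> f y) = 0))"

text \<open>One component F(Y,Z) of a class of maps: Gateaux differentiable maps forming a vector space.\<close>
definition map_class_vs :: "('a::real_normed_vector \<Rightarrow> 'b::real_normed_vector) set \<Rightarrow> bool" where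
  "map_class_vs C \<longleftrightarrow>
     (\<forall>F\<in>C. gateaux_differentiable F) \<and> (\<lambda>x. 0) \<in> C \<and>
     (\<forall>F\<in>C. \<forall>G\<in>C. (\<lambda>x. F x + G x) \<in> C) \<and>
     (\<forall>c. \<forall>F\<in>C. (\<lambda>x. c *\<^sub>R F x) \<in> C)"

text \<open>Condition (iii) for one triple: B o F o A in C(Y,Z) for F in C(U,V), A, B affine.\<close>
definition affine_closed :: "('u::real_normed_vector \<Rightarrow> 'v::real_normed_vector) set \<Rightarrow>
     ('y::real_normed_vector \<Rightarrow> 'z::real_normed_vector) set \<Rightarrow> bool" where
  "affine_closed CUV CYZ \<longleftrightarrow>
     (\<forall>(A::'y \<Rightarrow> 'u) (B::'v \<Rightarrow> 'z) F. caffine A \<and> caffine B \<and> F \<in> CUV \<longrightarrow> B \<circ> F \<circ> A \<in> CYZ)"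

end

theory Submission
  imports Defs
begin

lemma gderiv_eq: "(dquot F y v \<longlongrightarrow> l) (at 0) \<Longrightarrow> gderiv F y v = l"
  unfolding gderiv_def by (rule tendsto_Lim) (simp_all add: trivial_limit_at)

lemma gd_tendsto: "gateaux_differentiable F \<Longrightarrow> (dquot F y v \<longlongrightarrow> gderiv F y v) (at 0)"
proof -
  assume "gateaux_differentiable F"
  then obtain L where "\<forall>v. (dquot F y v \<longlongrightarrow> L v) (at 0)" unfolding gateaux_differentiable_def by blast
  then show ?thesis using gderiv_eq by metis
qed

lemma ev_nz: "eventually (\<lambda>t::real. t \<noteq> 0) (at 0)"
  by (simp add: eventually_at_filter)

lemma gderiv_lin: assumes "bounded_linear L" shows "gderiv (\<lambda>y. L y + c) y v = L v"
proof (rule gderiv_eq)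
  interpret bounded_linear L by fact
  have "\<forall>\<^sub>F t in at (0::real). L v = dquot (\<lambda>y. L y + c) y v t"
    using ev_nz by eventually_elim (simp add: dquot_def add scaleR)
  then show "(dquot (\<lambda>y. L y + c) y v \<longlongrightarrow> L v) (at 0)"
    by (rule Lim_transform_eventually[OF tendsto_const])
qed

lemma gderiv_graph: assumes "(dquot F y v \<longlongrightarrow> l) (at 0)"
  shows "gderiv (\<lambda>y. (y, F y)) y v = (v, l)"
proof (rule gderiv_eq)
  have "((\<lambda>t. (v, dquot F y v t)) \<longlongrightarrow> (v, l)) (at 0)"
    by (intro tendsto_Pair tendsto_const assms)
  moreover have "\<forall>\<^sub>F t in at (0::real). (v, dquot F y v t) = dquot (\<lambda>y. (y, F y)) y v t"
    using ev_nz by eventually_elim (simp add: dquot_def)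
  ultimately show "(dquot (\<lambda>y. (y, F y)) y v \<longlongrightarrow> (v, l)) (at 0)"
    by (rule Lim_transform_eventually)
qed

lemma gderiv_G: assumes "(dquot F y v \<longlongrightarrow> l) (at 0)"
  shows "gderiv (\<lambda>p. snd p - F (fst p)) (y, z) (v, w) = w - l"
proof (rule gderiv_eq)
  have "((\<lambda>t. w - dquot F y v t) \<longlongrightarrow> w - l) (at 0)"
    by (intro tendsto_diff tendsto_const assms)
  moreover have "\<forall>\<^sub>F t in at (0::real). w - dquot F y v t = dquot (\<lambda>p. snd p - F (fst p)) (y, z) (v, w) t"
    using ev_nz by eventually_elim (simp add: dquot_def algebra_simps)
  ultimately show "(dquot (\<lambda>p. snd p - F (fst p)) (y, z) (v, w) \<longlongrightarrow> w - l) (at 0)"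
    by (rule Lim_transform_eventually)
qed

lemma iter_zero: "iter_dd (\<lambda>z. 0::'b::real_normed_vector) vs = (\<lambda>z::'a::real_normed_vector. 0)"
proof (induction vs)
  case (Cons v vs)
  have "gderiv (\<lambda>z::'a. 0::'b) x v = 0" for x
    by (rule gderiv_eq) (simp add: dquot_def)
  then show ?case using Cons by simp
qed simp

lemma smooth_zero: "smooth (\<lambda>z::'a::real_normed_vector. 0::'b::real_normed_vector)"
  unfolding smooth_def iter_zero
  by (simp add: iter_zero gderiv_eq dquot_def)

lemma iter_lift: assumes "smooth f"
  shows "iter_dd (\<lambda>p::'a::real_normed_vector \<times> 'b::real_normed_vector. (f (fst p), 0::'b)) vs
       = (\<lambda>p. (iter_dd f (map fst vs) (fst p), 0))"
proof (induction vs)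
  case (Cons u vs)
  have "gderiv (\<lambda>p. (iter_dd f (map fst vs) (fst p), 0::'b)) p u = (iter_dd f (fst u # map fst vs) (fst p), 0)" for p
  proof (rule gderiv_eq)
    have "((\<lambda>t. (dquot (iter_dd f (map fst vs)) (fst p) (fst u) t, 0::'b)) \<longlongrightarrow> (iter_dd f (fst u # map fst vs) (fst p), 0)) (at 0)"
      using assms unfolding smooth_def by (intro tendsto_Pair tendsto_const) blast
    moreover have "(\<lambda>t. (dquot (iter_dd f (map fst vs)) (fst p) (fst u) t, 0::'b)) = dquot (\<lambda>p. (iter_dd f (map fst vs) (fst p), 0::'b)) p u"
      by (rule ext) (simp add: dquot_def)
    ultimately show "(dquot (\<lambda>p. (iter_dd f (map fst vs) (fst p), 0::'b)) p u \<longlongrightarrow> (iter_dd f (fst u # map fst vs) (fst p), 0)) (at 0)"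
      by simp
  qed
  then show ?case using Cons by simp
qed simp

lemma smooth_lift: assumes "smooth f"
  shows "smooth (\<lambda>p::'a::real_normed_vector \<times> 'b::real_normed_vector. (f (fst p), 0::'b))"
  unfolding smooth_def iter_lift[OF assms]
proof (intro conjI allI impI)
  fix vs x v
  show "(dquot (\<lambda>p. (iter_dd f (map fst vs) (fst p), 0::'b)) x v \<longlongrightarrow> (iter_dd f (map fst (v # vs)) (fst x), 0)) (at 0)"
  proof -
    have "((\<lambda>t. (dquot (iter_dd f (map fst vs)) (fst x) (fst v) t, 0::'b)) \<longlongrightarrow> (iter_dd f (fst v # map fst vs) (fst x), 0)) (at 0)"
      using assms unfolding smooth_def by (intro tendsto_Pair tendsto_const) blast
    moreover have "(\<lambda>t. (dquot (iter_dd f (map fst vs)) (fst x) (fst v) t, 0::'b)) = dquot (\<lambda>p. (iter_dd f (map fst vs) (fst p), 0::'b)) x v"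
      by (rule ext) (simp add: dquot_def)
    ultimately show ?thesis by simp
  qed
next
  fix k and vs :: "('a \<times> 'b) list" and x :: "'a \<times> 'b" and X V
  assume h: "length vs = k \<and> (\<forall>n. length (V n) = k) \<and> X \<longlonglongrightarrow> x \<and> (\<forall>i<k. (\<lambda>n. V n ! i) \<longlonglongrightarrow> vs ! i)"
  have "(\<lambda>n. iter_dd f (map fst (V n)) (fst (X n))) \<longlonglongrightarrow> iter_dd f (map fst vs) (fst x)"
  proof -
    have s2: "\<And>k (vs::'a list) x X V. length vs = k \<Longrightarrow> (\<forall>n. length (V n) = k) \<Longrightarrow> X \<longlonglongrightarrow> x \<Longrightarrow>
       (\<forall>i<k. (\<lambda>n. V n ! i) \<longlonglongrightarrow> vs ! i) \<Longrightarrow> (\<lambda>n. iter_dd f (V n) (X n)) \<longlonglongrightarrow> iter_dd f vs x"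
      using assms unfolding smooth_def by blast
    have c: "(\<lambda>n. map fst (V n) ! i) \<longlonglongrightarrow> map fst vs ! i" if "i < k" for i
    proof -
      have "(\<lambda>n. fst (V n ! i)) \<longlonglongrightarrow> fst (vs ! i)" using h that by (intro tendsto_fst) blast
      then show ?thesis using h that by simp
    qed
    have "(\<lambda>n. fst (X n)) \<longlonglongrightarrow> fst x" using h by (intro tendsto_fst) blast
    then show ?thesis using h c by (intro s2[where k=k]) auto
  qed
  then show "(\<lambda>n. (iter_dd f (map fst (V n)) (fst (X n)), 0::'b)) \<longlonglongrightarrow> (iter_dd f (map fst vs) (fst x), 0)"
    by (intro tendsto_Pair tendsto_const)
qed

lemma gderiv_bl: "bounded_linear L \<Longrightarrow> gderiv L y v = L v"
  using gderiv_lin[of L 0 y v] by simp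

lemma caffine_bl: "bounded_linear L \<Longrightarrow> caffine L"
  unfolding caffine_def by (rule exI[of _ L], rule exI[of _ 0]) simp

theorem theorem2p9:
  fixes \<phi>Y :: "('y::banach \<Rightarrow> 'y) \<Rightarrow> ('y \<Rightarrow> 'y)"
    and \<phi>Z :: "('z::banach \<Rightarrow> 'z) \<Rightarrow> ('z \<Rightarrow> 'z)"
    and \<phi>P :: "('y \<times> 'z \<Rightarrow> 'y \<times> 'z) \<Rightarrow> ('y \<times> 'z \<Rightarrow> 'y \<times> 'z)"
    and CYZ :: "('y \<Rightarrow> 'z) set"
    and CZZ :: "('z \<Rightarrow> 'z) set"
    and CPZ :: "('y \<times> 'z \<Rightarrow> 'z) set"
  assumes int: "integrator_comp \<phi>Y" "integrator_comp \<phi>Z" "integrator_comp \<phi>P"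
    and aeq: "aff_equiv \<phi>Y \<phi>Y" "aff_equiv \<phi>Y \<phi>Z" "aff_equiv \<phi>Y \<phi>P"
             "aff_equiv \<phi>Z \<phi>Y" "aff_equiv \<phi>Z \<phi>Z" "aff_equiv \<phi>Z \<phi>P"
             "aff_equiv \<phi>P \<phi>Y" "aff_equiv \<phi>P \<phi>Z" "aff_equiv \<phi>P \<phi>P"
    and cls_id: "id \<in> CZZ"
    and cls_vs: "map_class_vs CYZ" "map_class_vs CZZ" "map_class_vs CPZ"
    and cls_aff: "affine_closed CYZ CYZ" "affine_closed CYZ CZZ" "affine_closed CYZ CPZ"
                 "affine_closed CZZ CYZ" "affine_closed CZZ CZZ" "affine_closed CZZ CPZ"
                 "affine_closed CPZ CYZ" "affine_closed CPZ CZZ" "affine_closed CPZ CPZ"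
  shows "((\<forall>F\<in>CYZ. inv_pres \<phi>Y F) \<and> (\<forall>G\<in>CPZ. inv_pres \<phi>P G)
            \<longrightarrow> (\<forall>F\<in>CYZ. func_equiv \<phi>Y \<phi>P F))
         \<and> ((\<forall>F\<in>CYZ. func_equiv \<phi>Y \<phi>P F) \<longrightarrow> (\<forall>F\<in>CYZ. inv_pres \<phi>Y F))"
proof (intro conjI impI)
  assume IP: "(\<forall>F\<in>CYZ. inv_pres \<phi>Y F) \<and> (\<forall>G\<in>CPZ. inv_pres \<phi>P G)"
  show "\<forall>F\<in>CYZ. func_equiv \<phi>Y \<phi>P F"
  proof
    fix F assume FC: "F \<in> CYZ"
    have gd: "gateaux_differentiable F" using cls_vs(1) FC unfolding map_class_vs_def by blast
    show "func_equiv \<phi>Y \<phi>P F" unfolding func_equiv_def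
    proof (intro ballI impI)
      fix f assume fv: "f \<in> vfields" and gv: "augmented F f \<in> vfields"
      define g where "g = augmented F f"
      have gp: "g p = (f (fst p), gderiv F (fst p) (f (fst p)))" for p
        unfolding g_def augmented_def by (simp add: case_prod_beta)
      have "related fst g f" unfolding related_def
        by (simp add: gderiv_bl bounded_linear_fst gp)
      then have r1: "related fst (\<phi>P g) (\<phi>Y f)"
        using aeq(7) fv gv caffine_bl[OF bounded_linear_fst] unfolding aff_equiv_def g_def by blast
      define G where "G = (\<lambda>p::'y\<times>'z. snd p - F (fst p))"
      have cid: "caffine (id::'z\<Rightarrow>'z)" using caffine_bl[OF bounded_linear_ident] by (simp add: id_def)
      have sC: "id \<circ> id \<circ> snd \<in> CPZ"
        using cls_aff(6) cls_id caffine_bl[OF bounded_linear_snd] cid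
        unfolding affine_closed_def by blast
      have mC: "uminus \<circ> F \<circ> fst \<in> CPZ"
        using cls_aff(3) FC caffine_bl[OF bounded_linear_fst] caffine_bl[OF bounded_linear_minus[OF bounded_linear_ident]]
        unfolding affine_closed_def by blast
      have "(\<lambda>x. (id \<circ> id \<circ> snd) x + (uminus \<circ> F \<circ> fst) x) \<in> CPZ"
        using cls_vs(3) sC mC unfolding map_class_vs_def by blast
      moreover have "(\<lambda>x. (id \<circ> id \<circ> snd) x + (uminus \<circ> F \<circ> fst) x) = G"
        unfolding G_def by (rule ext) simp
      ultimately have GC: "G \<in> CPZ" by simp
      have "\<forall>p. gderiv G p (g p) = 0"
      proof
        fix p :: "'y \<times> 'z"
        obtain y z where p: "p = (y, z)" by (cases p)
        show "gderiv G p (g p) = 0"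
          unfolding G_def p gp using gderiv_G[OF gd_tendsto[OF gd]] by simp
      qed
      then have ip: "\<forall>p. gderiv G p (\<phi>P g p) = 0"
        using IP GC gv unfolding inv_pres_def g_def by blast
      show "related (\<lambda>y. (y, F y)) (\<phi>Y f) (\<phi>P (augmented F f))"
        unfolding related_def g_def[symmetric]
      proof
        fix y
        obtain a b where ab: "\<phi>P g (y, F y) = (a, b)" by (cases "\<phi>P g (y, F y)")
        have a: "a = \<phi>Y f y" using r1 ab unfolding related_def
          by (metis bounded_linear_fst fst_conv gderiv_bl)
        have "gderiv G (y, F y) (a, b) = 0" using ip ab by metis
        then have "b = gderiv F y a" unfolding G_def using gderiv_G[OF gd_tendsto[OF gd]] by simp
        then show "gderiv (\<lambda>y. (y, F y)) y (\<phi>Y f y) = \<phi>P g (y, F y)"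
          using ab a gderiv_graph[OF gd_tendsto[OF gd]] by simp
      qed
    qed
  qed
next
  assume FE: "\<forall>F\<in>CYZ. func_equiv \<phi>Y \<phi>P F"
  have zv: "(\<lambda>z::'z. 0::'z) \<in> vfields" unfolding vfields_def using smooth_zero by simp
  define k where "k = \<phi>Z (\<lambda>z. 0) 0"
  have tr: "\<phi>Z (\<lambda>z. 0) w = k" for w
  proof -
    have "related (\<lambda>z. z + w) (\<lambda>z::'z. 0::'z) (\<lambda>z. 0)"
      unfolding related_def using gderiv_lin[OF bounded_linear_ident, of w] by simp
    moreover have "caffine (\<lambda>z::'z. z + w)" unfolding caffine_def
      by (rule exI[of _ "\<lambda>x. x"]) (auto intro: bounded_linear_ident)
    ultimately have "related (\<lambda>z. z + w) (\<phi>Z (\<lambda>z. 0)) (\<phi>Z (\<lambda>z. 0))"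
      using aeq(5) zv unfolding aff_equiv_def by blast
    then have "gderiv (\<lambda>z. z + w) 0 (\<phi>Z (\<lambda>z. 0) 0) = \<phi>Z (\<lambda>z. 0) w"
      unfolding related_def by (metis add_0)
    then show ?thesis unfolding k_def using gderiv_lin[OF bounded_linear_ident, of w] by simp
  qed
  have k0: "k = 0"
  proof -
    have bl: "bounded_linear (\<lambda>z::'z. (2::real) *\<^sub>R z)" by (rule bounded_linear_scaleR_right)
    have "related (\<lambda>z::'z. (2::real) *\<^sub>R z) (\<lambda>z::'z. 0::'z) (\<lambda>z. 0)"
      unfolding related_def using gderiv_bl[OF bl] by simp
    then have "related (\<lambda>z::'z. (2::real) *\<^sub>R z) (\<phi>Z (\<lambda>z. 0)) (\<phi>Z (\<lambda>z. 0))"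
      using aeq(5) zv caffine_bl[OF bl] unfolding aff_equiv_def by blast
    then have "(2::real) *\<^sub>R k = k" unfolding related_def using tr gderiv_bl[OF bl] by metis
    then show ?thesis by (simp add: scaleR_2)
  qed
  show "\<forall>F\<in>CYZ. inv_pres \<phi>Y F"
  proof
    fix F assume FC: "F \<in> CYZ"
    have gd: "gateaux_differentiable F" using cls_vs(1) FC unfolding map_class_vs_def by blast
    show "inv_pres \<phi>Y F" unfolding inv_pres_def
    proof (intro ballI impI allI)
      fix f y assume fv: "f \<in> vfields" and h0: "\<forall>y. gderiv F y (f y) = 0"
      define g where "g = augmented F f"
      have g: "g = (\<lambda>p. (f (fst p), 0::'z))"
        unfolding g_def augmented_def using h0 by (auto simp: case_prod_beta)
      have gv: "g \<in> vfields" using fv smooth_lift unfolding g vfields_def by blast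
      have "related (\<lambda>y. (y, F y)) (\<phi>Y f) (\<phi>P g)"
        using FE FC fv gv unfolding func_equiv_def g_def by blast
      then have e: "(\<phi>Y f y, gderiv F y (\<phi>Y f y)) = \<phi>P g (y, F y)"
        unfolding related_def using gderiv_graph[OF gd_tendsto[OF gd]] by metis
      have "related snd g (\<lambda>z. 0)" unfolding related_def g
        by (simp add: gderiv_bl bounded_linear_snd)
      then have "related snd (\<phi>P g) (\<phi>Z (\<lambda>z. 0))"
        using aeq(8) gv zv caffine_bl[OF bounded_linear_snd] unfolding aff_equiv_def by blast
      then have "snd (\<phi>P g p) = 0" for p
        unfolding related_def using tr k0 gderiv_bl[OF bounded_linear_snd] by metis
      then show "gderiv F y (\<phi>Y f y) = 0" using e by (metis snd_conv)
    qed
  qed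
qed

end
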